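(* Let $n\ge3$ and $(x,y)\in\mathbb{C}^n\times\mathbb{C}^{n-1}$. The following are equivalent: (i) $(x,y)\in\mathbb{G}_{1,n}$; (ii) for each $\xi\in\overline{\mathbb{D}}$, the point $(\widetilde{x}(\xi),\widetilde{y}(\xi))\in\mathbb{C}^{n-1}\times\mathbb{C}^{n-2}$ belongs to $\mathbb{G}_{1,n-1}$, where \[ \widetilde{x}_j(\xi):=\frac{(n-j)x_j-j\xi x_{j+1}}{(n-1)-\xi y_1},\ j=1,\dots,n-1,\qquad \widetilde{y}_j(\xi):=\frac{(n-1-j)y_j-(j+1)\xi y_{j+1}}{(n-1)-\xi y_1},\ j=1,\dots,n-2 \] (part of the assertion (ii) being that the denominators $(n-1)-\xi y_1$ are nonzero for $\xi\in\overline{\mathbb{D}}$).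
   Context: $\mathbb{D}$ is the open unit disc. For $N\ge2$ and $(x,y)\in\mathbb{C}^N\times\mathbb{C}^{N-1}$: $P_N(z;x):=\sum_{j=0}^{N-1}(-1)^jx_{j+1}z^j$, $Q_N(z;y):=1+\sum_{j=1}^{N-1}(-1)^jy_jz^j$, and $\mathbb{G}_{1,N}:=\{(x,y): \text{the zero set of }(z,w)\mapsto Q_N(z;y)-wP_N(z;x)\text{ in }\mathbb{C}^2\text{ does not meet }\overline{\mathbb{D}}^2\}$. *)

theory Defs
  imports "HOL-Analysis.Analysis"
begin

text \<open>Points of C^N x C^(N-1) are represented by coordinate functions
  x, y :: nat => complex, with x_1..x_N and y_1..y_(N-1) the relevant entries
  (other entries are ignored by all definitions below).\<close>

definition PN :: "nat \<Rightarrow> (nat \<Rightarrow> complex) \<Rightarrow> complex \<Rightarrow> complex" where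
  "PN N x z = (\<Sum>j<N. (-1)^j * x (j+1) * z^j)"

definition QN :: "nat \<Rightarrow> (nat \<Rightarrow> complex) \<Rightarrow> complex \<Rightarrow> complex" where
  "QN N y z = 1 + (\<Sum>j\<in>{1..N-1}. (-1)^j * y j * z^j)"

definition G1 :: "nat \<Rightarrow> ((nat \<Rightarrow> complex) \<times> (nat \<Rightarrow> complex)) set" where
  "G1 N = {(x, y). \<forall>z w. cmod z \<le> 1 \<and> cmod w \<le> 1 \<longrightarrow> QN N y z - w * PN N x z \<noteq> 0}"

definition xtil :: "nat \<Rightarrow> (nat \<Rightarrow> complex) \<Rightarrow> (nat \<Rightarrow> complex) \<Rightarrow> complex \<Rightarrow> nat \<Rightarrow> complex" where
  "xtil n x y \<xi> j = ((of_nat n - of_nat j) * x j - of_nat j * \<xi> * x (j+1))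
                      / ((of_nat n - 1) - \<xi> * y 1)"

definition ytil :: "nat \<Rightarrow> (nat \<Rightarrow> complex) \<Rightarrow> complex \<Rightarrow> nat \<Rightarrow> complex" where
  "ytil n y \<xi> j = ((of_nat n - 1 - of_nat j) * y j - (of_nat j + 1) * \<xi> * y (j+1))
                      / ((of_nat n - 1) - \<xi> * y 1)"

end

theory Submission
  imports Defs "HOL-Computational_Algebra.Fundamental_Theorem_Algebra"
begin


lemma single_root:
  fixes a z :: complex
  assumes "cmod a > 1" "cmod z \<le> 1"
  shows "(1 - (cmod z)^2) * (cmod (1/(z-a)))^2 + 2 * Re (z * (1/(z - a))) < 1"
proof -
  have t: "z - a \<noteq> 0" using assms by auto
  define t where "t = z - a"
  have tp: "(cmod t)^2 > 0" using t t_def by simp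
  have e1: "(cmod (1/t))^2 = 1/(cmod t)^2" by (simp add: norm_divide power_divide)
  have e2: "Re (z * (1/t)) = (Re z * Re t + Im z * Im t)/(cmod t)^2"
    by (simp add: Re_divide')
  have a2: "(Re a)^2 + (Im a)^2 > 1" using assms(1)
    by (metis cmod_power2 less_1_mult abs_square_less_1 abs_norm_cancel not_less power2_eq_square
        one_less_power zero_less_two le_less)
  have key: "(1 - (cmod z)^2) + 2 * (Re z * Re t + Im z * Im t) < (cmod t)^2"
    using a2 unfolding t_def cmod_power2 by (simp add: power2_eq_square algebra_simps)
  have "(1 - (cmod z)^2) * (cmod (1/t))^2 + 2 * Re (z * (1/t))
      = ((1 - (cmod z)^2) + 2 * (Re z * Re t + Im z * Im t)) / (cmod t)^2"
    unfolding e1 e2 using tp by (simp add: field_simps)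
  also have "\<dots> < 1" using key tp by simp
  finally show ?thesis unfolding t_def .
qed

lemma combine:
  fixes V u z :: complex and A d :: real
  assumes A: "A \<ge> 0" and d: "d > 0"
    and h1: "A*(cmod V)^2 + 2*d*Re(z*V) < d^2"
    and h2: "A*(cmod u)^2 + 2*Re(z*u) < 1"
  shows "A*(cmod (V+u))^2 + 2*(d+1)*Re(z*(V+u)) < (d+1)^2"
proof -
  have sq: "d * (cmod (V+u))^2 \<le> (d+1)*((cmod V)^2 + d*(cmod u)^2)"
  proof -
    have "0 \<le> (Re V - d * Re u)^2 + (Im V - d * Im u)^2" by simp
    thus ?thesis unfolding cmod_power2 by (simp add: power2_eq_square algebra_simps)
  qed
  have sq2: "A * (cmod (V+u))^2 \<le> (d+1) * (A*(cmod V)^2/d + A*(cmod u)^2)"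
  proof -
    have "A * (d * (cmod (V+u))^2) \<le> A * ((d+1)*((cmod V)^2 + d*(cmod u)^2))"
      using sq A by (rule mult_left_mono)
    hence "(A * (d * (cmod (V+u))^2))/d \<le> (A * ((d+1)*((cmod V)^2 + d*(cmod u)^2)))/d"
      using d by (intro divide_right_mono) auto
    moreover have "(A * (d * (cmod (V+u))^2))/d = A * (cmod (V+u))^2" using d by simp
    moreover have "(A * ((d+1)*((cmod V)^2 + d*(cmod u)^2)))/d = (d+1) * (A*(cmod V)^2/d + A*(cmod u)^2)"
      using d by (simp add: field_simps)
    ultimately show ?thesis by simp
  qed
  have h1': "A*(cmod V)^2/d + 2*Re(z*V) < d"
    using h1 d by (simp add: field_simps power2_eq_square)
  have "A*(cmod V)^2/d + A*(cmod u)^2 + 2*Re(z*V) + 2*Re(z*u) < d + 1" using h1' h2 by simp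
  hence "(d+1) * (A*(cmod V)^2/d + A*(cmod u)^2 + 2*Re(z*V) + 2*Re(z*u)) < (d+1)*(d+1)"
    using d by simp
  thus ?thesis using sq2 by (simp add: algebra_simps power2_eq_square)
qed

lemma laguerre_aux:
  fixes p :: "complex poly" and z :: complex
  assumes "p \<noteq> 0" "\<forall>a. poly p a = 0 \<longrightarrow> 1 < cmod a" "cmod z \<le> 1"
  shows "\<forall>d::nat. degree p \<le> d \<longrightarrow> 0 < d \<longrightarrow>
     (1 - (cmod z)^2) * (cmod (poly (pderiv p) z / poly p z))^2
       + 2 * real d * Re (z * (poly (pderiv p) z / poly p z)) < (real d)^2"
  using assms
proof (induction "degree p" arbitrary: p)
  case 0
  then obtain c where "p = [:c:]" by (metis degree_eq_zeroE)
  hence "pderiv p = 0" by (simp add: pderiv_pCons)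
  thus ?case by simp
next
  case (Suc m)
  have "\<not> constant (poly p)" using Suc(2) constant_degree by (metis nat.simps(3))
  then obtain a where a: "poly p a = 0" using fundamental_theorem_of_algebra by blast
  then obtain q where pq: "p = [:-a,1:] * q" using poly_eq_0_iff_dvd by (metis dvdE)
  have q0: "q \<noteq> 0" using Suc(3) pq by auto
  have "degree p = degree [:-a,1:] + degree q" unfolding pq by (rule degree_mult_eq) (use q0 in auto)
  hence dq: "degree q = m" using Suc(2) by simp
  have qroots: "\<forall>b. poly q b = 0 \<longrightarrow> 1 < cmod b" using Suc(4) pq by auto
  have a1: "1 < cmod a" using Suc(4) a by auto
  have za: "z - a \<noteq> 0" using a1 Suc(5) by auto
  have qz: "poly q z \<noteq> 0" using qroots Suc(5) by force
  have IH: "\<forall>d::nat. m \<le> d \<longrightarrow> 0 < d \<longrightarrow>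
     (1 - (cmod z)^2) * (cmod (poly (pderiv q) z / poly q z))^2
       + 2 * real d * Re (z * (poly (pderiv q) z / poly q z)) < (real d)^2"
    using Suc(1)[OF dq[symmetric] q0 qroots Suc(5)] dq by simp
  define Vq where "Vq = poly (pderiv q) z / poly q z"
  define u where "u = 1/(z-a)"
  have V: "poly (pderiv p) z / poly p z = Vq + u"
  proof -
    have D: "pderiv p = q + [:-a,1:] * pderiv q" unfolding pq pderiv_mult by (simp add: pderiv_pCons)
    have "poly (pderiv p) z = poly q z + poly [:-a,1:] z * poly (pderiv q) z"
      unfolding D poly_add poly_mult ..
    moreover have "poly [:-a,1:] z = z - a" by simp
    ultimately have P1: "poly (pderiv p) z = poly q z + (z - a) * poly (pderiv q) z" by simp
    have P2: "poly p z = (z - a) * poly q z" unfolding pq by (simp add: algebra_simps)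
    show ?thesis unfolding P1 P2 unfolding Vq_def u_def using za qz by (simp add: field_simps)
  qed
  have su: "(1 - (cmod z)^2) * (cmod u)^2 + 2 * Re (z * u) < 1"
    unfolding u_def by (rule single_root[OF a1 Suc(5)])
  have A: "1 - (cmod z)^2 \<ge> 0" using power_le_one[OF norm_ge_zero Suc(5), of 2] by simp
  show ?case
  proof (intro allI impI)
    fix d :: nat assume d1: "degree p \<le> d" "0 < d"
    show "(1 - (cmod z)^2) * (cmod (poly (pderiv p) z / poly p z))^2
       + 2 * real d * Re (z * (poly (pderiv p) z / poly p z)) < (real d)^2"
    proof (cases "d = 1")
      case True
      hence "m = 0" using d1 Suc(2) by simp
      hence "degree q = 0" using dq by simp
      then obtain c where "q = [:c:]" by (metis degree_eq_zeroE)
      hence "Vq = 0" unfolding Vq_def by (simp add: pderiv_pCons)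
      thus ?thesis using su True V by simp
    next
      case False
      hence "m \<le> d - 1" "0 < d - 1" using d1 Suc(2) by auto
      hence h: "(1 - (cmod z)^2) * (cmod Vq)^2 + 2 * real (d-1) * Re (z * Vq) < (real (d-1))^2"
        using IH unfolding Vq_def by blast
      have "real (d-1) > 0" using \<open>0 < d - 1\<close> by simp
      from combine[OF A this h su] have
        "(1 - (cmod z)^2) * (cmod (Vq+u))^2 + 2 * (real (d-1)+1) * Re (z * (Vq+u)) < (real (d-1)+1)^2" .
      moreover have "real (d-1) + 1 = real d" using d1 by simp
      ultimately show ?thesis using V by simp
    qed
  qed
qed

lemma laguerre:
  fixes p :: "complex poly" and z \<xi> :: complex
  assumes "p \<noteq> 0" "\<forall>a. poly p a = 0 \<longrightarrow> 1 < cmod a" "cmod z \<le> 1" "cmod \<xi> \<le> 1"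
    "degree p \<le> d" "0 < d"
  shows "of_nat d * poly p z + (\<xi> - z) * poly (pderiv p) z \<noteq> 0"
proof
  assume E: "of_nat d * poly p z + (\<xi> - z) * poly (pderiv p) z = 0"
  have pz: "poly p z \<noteq> 0" using assms(2,3) by force
  define V where "V = poly (pderiv p) z / poly p z"
  have h: "(1 - (cmod z)^2) * (cmod V)^2 + 2 * real d * Re (z * V) < (real d)^2"
    using laguerre_aux[OF assms(1-3)] assms(5,6) unfolding V_def by blast
  have zx: "z - \<xi> \<noteq> 0" using E pz assms(6) by auto
  have Vd: "V = of_nat d / (z - \<xi>)" using E pz zx unfolding V_def
    by (simp add: field_simps)
  define t where "t = z - \<xi>"
  have tp: "(cmod t)^2 > 0" using zx t_def by simp
  have e1: "(cmod V)^2 = (real d)^2/(cmod t)^2" unfolding Vd t_def[symmetric]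
    by (simp add: norm_divide power_divide)
  have e2: "Re (z * V) = real d * (Re z * Re t + Im z * Im t)/(cmod t)^2" unfolding Vd t_def[symmetric]
    by (simp add: Re_divide' algebra_simps)
  have "(1 - (cmod z)^2) * (real d)^2 + 2 * real d * (real d * (Re z * Re t + Im z * Im t))
       < (real d)^2 * (cmod t)^2"
  proof -
    have "((1 - (cmod z)^2) * (real d)^2 + 2 * real d * (real d * (Re z * Re t + Im z * Im t))) / (cmod t)^2
       = (1 - (cmod z)^2) * ((real d)^2/(cmod t)^2) + 2 * real d * (real d * (Re z * Re t + Im z * Im t)/(cmod t)^2)"
      by (simp add: add_divide_distrib)
    also have "\<dots> < (real d)^2" using h unfolding e1 e2 .
    finally show ?thesis using tp by (simp add: pos_divide_less_eq)
  qed
  hence "(real d)^2 * ((1 - (cmod z)^2) + 2 * (Re z * Re t + Im z * Im t)) < (real d)^2 * (cmod t)^2"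
    by (simp add: algebra_simps power2_eq_square)
  hence "(1 - (cmod z)^2) + 2 * (Re z * Re t + Im z * Im t) < (cmod t)^2"
    using assms(6) by simp
  hence "1 < (Re \<xi>)^2 + (Im \<xi>)^2"
    unfolding t_def cmod_power2 by (simp add: power2_eq_square algebra_simps)
  hence "1 < (cmod \<xi>)^2" by (simp add: cmod_power2)
  thus False using power_le_one[OF norm_ge_zero assms(4), of 2] by simp
qed



definition cQ :: "(nat \<Rightarrow> complex) \<Rightarrow> nat \<Rightarrow> complex" where
  "cQ y j = (if j = 0 then 1 else (-1)^j * y j)"
definition cP :: "(nat \<Rightarrow> complex) \<Rightarrow> nat \<Rightarrow> complex" where
  "cP x j = (-1)^j * x (j+1)"

lemma QN_sum: "N \<ge> 1 \<Longrightarrow> QN N y z = (\<Sum>j<N. cQ y j * z^j)"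
proof -
  assume "N \<ge> 1"
  then obtain M where N: "N = Suc M" by (cases N) auto
  have "(\<Sum>j<Suc M. cQ y j * z^j) = cQ y 0 * z^0 + (\<Sum>j<M. cQ y (Suc j) * z^(Suc j))"
    by (rule sum.lessThan_Suc_shift)
  also have "(\<Sum>j<M. cQ y (Suc j) * z^(Suc j)) = (\<Sum>j\<in>{1..M}. (-1)^j * y j * z^j)"
  proof -
    have "(\<Sum>j\<in>{1..M}. (-1)^j * y j * z^j) = (\<Sum>j\<in>Suc ` {..<M}. (-1)^j * y j * z^j)"
      by (simp add: atLeast1_atMost_eq_remove0 lessThan_atLeast0 image_Suc_atLeastLessThan atLeastLessThanSuc_atLeastAtMost)
    also have "\<dots> = (\<Sum>j<M. (-1)^(Suc j) * y (Suc j) * z^(Suc j))"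
      by (simp add: sum.reindex)
    finally show ?thesis by (simp add: cQ_def)
  qed
  finally show ?thesis unfolding QN_def N by (simp add: cQ_def)
qed

lemma PN_sum: "PN N x z = (\<Sum>j<N. cP x j * z^j)"
  unfolding PN_def cP_def by (simp add: mult.assoc)

lemma sumB:
  fixes c :: "nat \<Rightarrow> complex"
  shows "of_nat m * (\<Sum>j<Suc m. c j * z^j) + (\<xi> - z) * (\<Sum>j<Suc m. of_nat j * c j * z^(j-1))
     = (\<Sum>j<m. ((of_nat m - of_nat j) * c j + \<xi> * of_nat (j+1) * c (j+1)) * z^j)"
proof -
  have s1: "(\<Sum>j<Suc m. of_nat j * c j * z^(j-1)) = (\<Sum>j<m. of_nat (j+1) * c (j+1) * z^j)"
    by (subst sum.lessThan_Suc_shift) simp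
  have s2: "z * (\<Sum>j<Suc m. of_nat j * c j * z^(j-1)) = (\<Sum>j<Suc m. of_nat j * c j * z^j)"
    unfolding sum_distrib_left
    by (rule sum.cong) (auto simp: power_eq_if)
  have s3: "of_nat m * (\<Sum>j<Suc m. c j * z^j) - (\<Sum>j<Suc m. of_nat j * c j * z^j)
      = (\<Sum>j<Suc m. (of_nat m - of_nat j) * c j * z^j)"
  proof -
    have "(\<Sum>j<Suc m. (of_nat m - of_nat j) * c j * z^j)
       = (\<Sum>j<Suc m. of_nat m * (c j * z^j) - of_nat j * c j * z^j)"
      by (rule sum.cong) (simp_all add: algebra_simps)
    also have "\<dots> = of_nat m * (\<Sum>j<Suc m. c j * z^j) - (\<Sum>j<Suc m. of_nat j * c j * z^j)"
      by (simp only: sum_subtractf sum_distrib_left)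
    finally show ?thesis by simp
  qed
  also have "\<dots> = (\<Sum>j<m. (of_nat m - of_nat j) * c j * z^j)" by simp
  finally have s3': "of_nat m * (\<Sum>j<Suc m. c j * z^j) - (\<Sum>j<Suc m. of_nat j * c j * z^j)
      = (\<Sum>j<m. (of_nat m - of_nat j) * c j * z^j)" .
  have "of_nat m * (\<Sum>j<Suc m. c j * z^j) + (\<xi> - z) * (\<Sum>j<Suc m. of_nat j * c j * z^(j-1))
      = (of_nat m * (\<Sum>j<Suc m. c j * z^j) - z * (\<Sum>j<Suc m. of_nat j * c j * z^(j-1)))
        + \<xi> * (\<Sum>j<Suc m. of_nat j * c j * z^(j-1))" by (simp add: algebra_simps)
  also have "\<dots> = (\<Sum>j<m. (of_nat m - of_nat j) * c j * z^j) + (\<Sum>j<m. \<xi> * of_nat (j+1) * c (j+1) * z^j)"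
    unfolding s2 unfolding s3' unfolding s1 by (simp add: sum_distrib_left mult.assoc)
  also have "\<dots> = (\<Sum>j<m. ((of_nat m - of_nat j) * c j + \<xi> * of_nat (j+1) * c (j+1)) * z^j)"
    by (simp add: sum.distrib[symmetric] algebra_simps)
  finally show ?thesis .
qed

lemma coef:
  assumes den: "(of_nat n - 1) - \<xi> * y 1 \<noteq> 0" and n: "n \<ge> 2"
  shows "(of_nat (n-1) - of_nat j) * (cQ y j - w * cP x j) + \<xi> * of_nat (j+1) * (cQ y (j+1) - w * cP x (j+1))
   = ((of_nat n - 1) - \<xi> * y 1) * (cQ (ytil n y \<xi>) j - w * cP (xtil n x y \<xi>) j)"
proof -
  define D where "D = (of_nat n - 1) - \<xi> * y 1"
  have D0: "D \<noteq> 0" using den D_def by simp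
  have nn: "(of_nat (n-1) :: complex) = of_nat n - 1" using n by (simp add: of_nat_diff)
  have yt: "D * ytil n y \<xi> j = (of_nat n - 1 - of_nat j) * y j - (of_nat j + 1) * \<xi> * y (j+1)"
    unfolding ytil_def D_def[symmetric] using D0 by simp
  have xt: "D * xtil n x y \<xi> (j+1) = (of_nat n - of_nat (j+1)) * x (j+1) - of_nat (j+1) * \<xi> * x (j+1+1)"
    unfolding xtil_def D_def[symmetric] using D0 by simp
  have R: "D * (cQ (ytil n y \<xi>) j - w * cP (xtil n x y \<xi>) j)
     = (if j = 0 then D else (-1)^j * (D * ytil n y \<xi> j)) - w * ((-1)^j * (D * xtil n x y \<xi> (j+1)))"
    unfolding cQ_def cP_def by (simp add: algebra_simps)
  show ?thesis
  proof (cases "j = 0")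
    case True
    show ?thesis unfolding D_def[symmetric] R xt using True unfolding cQ_def cP_def D_def nn
      by (simp add: algebra_simps)
  next
    case False
    show ?thesis unfolding D_def[symmetric] R xt yt using False unfolding cQ_def cP_def nn
      by (simp add: algebra_simps)
  qed
qed

lemma main_identity:
  fixes x y :: "nat \<Rightarrow> complex"
  assumes den: "(of_nat n - 1) - \<xi> * y 1 \<noteq> 0" and n: "n \<ge> 3"
  shows "of_nat (n-1) * (QN n y z - w * PN n x z)
          + (\<xi> - z) * (\<Sum>j<n. of_nat j * (cQ y j - w * cP x j) * z^(j-1))
     = ((of_nat n - 1) - \<xi> * y 1) * (QN (n-1) (ytil n y \<xi>) z - w * PN (n-1) (xtil n x y \<xi>) z)"
proof -
  obtain m where m: "n = Suc m" using n by (cases n) auto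
  have n2: "n \<ge> 2" using n by simp
  have e: "QN n y z - w * PN n x z = (\<Sum>j<n. (cQ y j - w * cP x j) * z^j)"
    using n by (simp add: QN_sum PN_sum sum_distrib_left sum_subtractf[symmetric] algebra_simps)
  have e2: "QN (n-1) (ytil n y \<xi>) z - w * PN (n-1) (xtil n x y \<xi>) z
     = (\<Sum>j<n-1. (cQ (ytil n y \<xi>) j - w * cP (xtil n x y \<xi>) j) * z^j)"
    using n by (simp add: QN_sum PN_sum sum_distrib_left sum_subtractf[symmetric] algebra_simps)
  have "of_nat (n-1) * (QN n y z - w * PN n x z)
          + (\<xi> - z) * (\<Sum>j<n. of_nat j * (cQ y j - w * cP x j) * z^(j-1))
      = (\<Sum>j<m. ((of_nat m - of_nat j) * (cQ y j - w * cP x j) + \<xi> * of_nat (j+1) * (cQ y (j+1) - w * cP x (j+1))) * z^j)"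
    unfolding e unfolding m using sumB[of m "\<lambda>j. cQ y j - w * cP x j" z \<xi>] by simp
  also have "\<dots> = (\<Sum>j<m. ((of_nat n - 1) - \<xi> * y 1) * (cQ (ytil n y \<xi>) j - w * cP (xtil n x y \<xi>) j) * z^j)"
    using coef[where n=n and \<xi>=\<xi> and y=y and x=x and w=w, OF den n2] n m by simp
  also have "\<dots> = ((of_nat n - 1) - \<xi> * y 1) * (QN (n-1) (ytil n y \<xi>) z - w * PN (n-1) (xtil n x y \<xi>) z)"
    unfolding e2 unfolding m by (simp add: sum_distrib_left mult.assoc)
  finally show ?thesis .
qed

lemma den_identity:
  assumes n: "n \<ge> 3"
  shows "of_nat (n-1) * (QN n y 0 - 0 * PN n x 0)
          + (\<xi> - 0) * (\<Sum>j<n. of_nat j * (cQ y j - 0 * cP x j) * 0^(j-1))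
     = (of_nat n - 1) - \<xi> * y 1"
proof -
  obtain m where m: "n = Suc (Suc m)" using n by (cases n; cases "n-1") auto
  have e: "QN n y 0 - 0 * PN n x 0 = (\<Sum>j<n. (cQ y j - 0 * cP x j) * 0^j)"
    using n by (simp add: QN_sum PN_sum)
  have "of_nat (n-1) * (QN n y 0 - 0 * PN n x 0)
          + (\<xi> - 0) * (\<Sum>j<n. of_nat j * (cQ y j - 0 * cP x j) * 0^(j-1))
     = (\<Sum>j<Suc m. ((of_nat (Suc m) - of_nat j) * (cQ y j - 0 * cP x j) + \<xi> * of_nat (j+1) * (cQ y (j+1) - 0 * cP x (j+1))) * 0^j)"
    unfolding e unfolding m using sumB[of "Suc m" "\<lambda>j. cQ y j - 0 * cP x j" 0 \<xi>] by simp
  also have "\<dots> = (of_nat (Suc m)) * cQ y 0 + \<xi> * cQ y 1"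
    by (subst sum.lessThan_Suc_shift) simp
  also have "\<dots> = (of_nat n - 1) - \<xi> * y 1" unfolding m cQ_def by simp
  finally show ?thesis .
qed


definition polc :: "(nat \<Rightarrow> complex) \<Rightarrow> nat \<Rightarrow> complex poly" where
  "polc c n = (\<Sum>j<n. monom (c j) j)"

lemma poly_polc: "poly (polc c n) z = (\<Sum>j<n. c j * z^j)"
  unfolding polc_def by (simp add: poly_sum poly_monom)

lemma pderiv_polc: "pderiv (polc c n) = (\<Sum>j<n. monom (of_nat j * c j) (j-1))"
  unfolding polc_def by (induction n) (simp_all add: pderiv_add pderiv_monom)

lemma poly_pderiv_polc: "poly (pderiv (polc c n)) z = (\<Sum>j<n. of_nat j * c j * z^(j-1))"
  unfolding pderiv_polc by (simp add: poly_sum poly_monom)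

lemma degree_polc: "degree (polc c n) \<le> n - 1"
  unfolding polc_def
  by (rule degree_sum_le) (auto intro: order.trans[OF degree_monom_le])

lemma G1_iff: "(a, b) \<in> G1 N \<longleftrightarrow> (\<forall>z w. cmod z \<le> 1 \<and> cmod w \<le> 1 \<longrightarrow> QN N b z - w * PN N a z \<noteq> 0)"
  unfolding G1_def by simp

lemma forward_key:
  fixes x y :: "nat \<Rightarrow> complex"
  assumes G: "(x, y) \<in> G1 n" and n: "n \<ge> 3"
    and w: "cmod w \<le> 1" and z: "cmod z \<le> 1" and xi: "cmod \<xi> \<le> 1"
  shows "of_nat (n-1) * (QN n y z - w * PN n x z)
          + (\<xi> - z) * (\<Sum>j<n. of_nat j * (cQ y j - w * cP x j) * z^(j-1)) \<noteq> 0"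
proof -
  define c where "c = (\<lambda>j. cQ y j - w * cP x j)"
  define p where "p = polc c n"
  have pv: "poly p a = QN n y a - w * PN n x a" for a
    unfolding p_def poly_polc c_def using n
    by (simp add: QN_sum PN_sum sum_distrib_left sum_subtractf[symmetric] algebra_simps)
  have p0: "p \<noteq> 0"
  proof
    assume "p = 0"
    hence "poly p 0 = 0" by simp
    thus False using G w unfolding G1_iff pv by force
  qed
  have roots: "\<forall>a. poly p a = 0 \<longrightarrow> 1 < cmod a"
    using G w unfolding G1_iff pv by (meson not_less)
  have "of_nat (n-1) * poly p z + (\<xi> - z) * poly (pderiv p) z \<noteq> 0"
    by (rule laguerre[OF p0 roots z xi]) (use n degree_polc p_def in auto)
  thus ?thesis unfolding pv unfolding p_def poly_pderiv_polc c_def by simp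
qed

theorem theorem3p4:
  fixes n :: nat and x y :: "nat \<Rightarrow> complex"
  assumes "n \<ge> 3"
  shows "(x, y) \<in> G1 n \<longleftrightarrow>
         (\<forall>\<xi>. cmod \<xi> \<le> 1 \<longrightarrow>
            (of_nat n - 1) - \<xi> * y 1 \<noteq> 0 \<and>
            (xtil n x y \<xi>, ytil n y \<xi>) \<in> G1 (n - 1))"
proof
  assume G: "(x, y) \<in> G1 n"
  show "\<forall>\<xi>. cmod \<xi> \<le> 1 \<longrightarrow>
            (of_nat n - 1) - \<xi> * y 1 \<noteq> 0 \<and>
            (xtil n x y \<xi>, ytil n y \<xi>) \<in> G1 (n - 1)"
  proof (intro allI impI conjI)
    fix \<xi> :: complex assume xi: "cmod \<xi> \<le> 1"
    show den: "(of_nat n - 1) - \<xi> * y 1 \<noteq> 0"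
      using forward_key[OF G assms, of 0 0 \<xi>] xi den_identity[where n=n and y=y and x=x and \<xi>=\<xi>, OF assms] by simp
    show "(xtil n x y \<xi>, ytil n y \<xi>) \<in> G1 (n - 1)"
      unfolding G1_iff
    proof (intro allI impI)
      fix z w :: complex assume zw: "cmod z \<le> 1 \<and> cmod w \<le> 1"
      have "((of_nat n - 1) - \<xi> * y 1) * (QN (n-1) (ytil n y \<xi>) z - w * PN (n-1) (xtil n x y \<xi>) z) \<noteq> 0"
        using forward_key[OF G assms, of w z \<xi>] zw xi main_identity[where n=n and \<xi>=\<xi> and y=y and x=x and z=z and w=w, OF den assms] by simp
      thus "QN (n-1) (ytil n y \<xi>) z - w * PN (n-1) (xtil n x y \<xi>) z \<noteq> 0" by simp
    qed
  qed
next
  assume H: "\<forall>\<xi>. cmod \<xi> \<le> 1 \<longrightarrow>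
            (of_nat n - 1) - \<xi> * y 1 \<noteq> 0 \<and>
            (xtil n x y \<xi>, ytil n y \<xi>) \<in> G1 (n - 1)"
  show "(x, y) \<in> G1 n"
    unfolding G1_iff
  proof (intro allI impI notI)
    fix z w :: complex assume zw: "cmod z \<le> 1 \<and> cmod w \<le> 1"
      and E: "QN n y z - w * PN n x z = 0"
    have den: "(of_nat n - 1) - z * y 1 \<noteq> 0" and T: "(xtil n x y z, ytil n y z) \<in> G1 (n - 1)"
      using H zw by auto
    have "QN (n-1) (ytil n y z) z - w * PN (n-1) (xtil n x y z) z \<noteq> 0"
      using T zw unfolding G1_iff by blast
    moreover have "((of_nat n - 1) - z * y 1) * (QN (n-1) (ytil n y z) z - w * PN (n-1) (xtil n x y z) z) = 0"
      using main_identity[where n=n and \<xi>=z and y=y and x=x and z=z and w=w, OF den assms] E by simp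
    ultimately show False using den by simp
  qed
qed

end
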